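(* Let $L\ge 3$ be an integer and $\lambda>0$. For every $\bm a=a_1\cdots a_L\in\{0,1\}^L$ with $\mathrm{wt}(\bm a)=2$, let $\Lambda(\bm a)$ be the largest eigenvalue of the operator $\hat P_{\bm a}(\hat\Pi^{(\mathrm{ph})}_{\bm a}-\lambda\hat\Pi)\hat P_{\bm a}$ restricted to the two-dimensional subspace $\mathrm{span}\{|i\rangle: a_i=1\}$, and let $\Omega^{(1)}_+(\lambda):=\max_{\bm a:\,\mathrm{wt}(\bm a)=2}\Lambda(\bm a)$. Then $$\Omega^{(1)}_+(\lambda)=\frac{3-2\lambda+\sqrt{1+2\lambda^2}}{4},$$ and this quantity is non-negative if $\lambda\le 3+\sqrt5$.
   Context: Work in $\mathbb C^L$ with orthonormal basis $\{|1\rangle,\dots,|L\rangle\}$; $\hat P(|\psi\rangle)=|\psi\rangle\langle\psi|$ and $\delta$ is the Kronecker delta. For $\bm a\in\{0,1\}^L$, $\mathrm{wt}(\bm a)$ is the number of $1$'s. $\hat\Pi$ is the real symmetric tridiagonal $L\times L$ matrix with $\langle i|\hat\Pi|i\rangle=1/2$ for $1\le i\le L$, $\langle i|\hat\Pi|i+1\rangle=\langle i+1|\hat\Pi|i\rangle=-1/(2\sqrt2)$ for $i\in\{1,L-1\}$, and $\langle i|\hat\Pi|i+1\rangle=\langle i+1|\hat\Pi|i\rangle=-1/4$ for $2\le i\le L-2$ (all other entries zero). For $\bm a\in\{0,1\}^L$, $\hat\Pi^{(\mathrm{ph})}_{\bm a}$ is the diagonal operator $$\hat\Pi^{(\mathrm{ph})}_{\bm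 a}=\delta_{a_2,1}\hat P(|1\rangle)+\sum_{i=2}^{L-1}\frac{\delta_{a_{i-1},1}+\delta_{a_{i+1},1}}{2}\hat P(|i\rangle)+\delta_{a_{L-1},1}\hat P(|L\rangle),$$ and $\hat P_{\bm a}=\sum_{i=1}^L\delta_{a_i,1}\hat P(|i\rangle)$. *)

theory Defs
  imports Complex_Main
begin

text \<open>Operators on C^L (real symmetric here) are represented as matrices
  nat => nat => real indexed by 1..L; vectors as nat => real supported on 1..L.\<close>

definition bitstrings :: "nat \<Rightarrow> (nat \<Rightarrow> nat) set" where
  "bitstrings L = {a. (\<forall>i. a i \<in> {0,1}) \<and> (\<forall>i. i \<notin> {1..L} \<longrightarrow> a i = 0)}"

definition wt :: "nat \<Rightarrow> (nat \<Rightarrow> nat) \<Rightarrow> nat" where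
  "wt L a = card {i \<in> {1..L}. a i = 1}"

definition delta :: "nat \<Rightarrow> nat \<Rightarrow> real" where
  "delta x y = (if x = y then 1 else 0)"

definition mmul :: "nat \<Rightarrow> (nat \<Rightarrow> nat \<Rightarrow> real) \<Rightarrow> (nat \<Rightarrow> nat \<Rightarrow> real) \<Rightarrow> (nat \<Rightarrow> nat \<Rightarrow> real)" where
  "mmul L A B = (\<lambda>i j. \<Sum>k=1..L. A i k * B k j)"

definition mvec :: "nat \<Rightarrow> (nat \<Rightarrow> nat \<Rightarrow> real) \<Rightarrow> (nat \<Rightarrow> real) \<Rightarrow> (nat \<Rightarrow> real)" where
  "mvec L A v = (\<lambda>i. if i \<in> {1..L} then (\<Sum>j=1..L. A i j * v j) else 0)"

definition PiOp :: "nat \<Rightarrow> nat \<Rightarrow> nat \<Rightarrow> real" where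
  "PiOp L i j =
     (if i \<in> {1..L} \<and> j \<in> {1..L} then
        (if i = j then 1/2
         else if (j = i + 1 \<or> i = j + 1) \<and> min i j \<in> {1, L - 1} then - 1 / (2 * sqrt 2)
         else if (j = i + 1 \<or> i = j + 1) \<and> 2 \<le> min i j \<and> min i j \<le> L - 2 then - 1/4
         else 0)
      else 0)"

definition PiPh :: "nat \<Rightarrow> (nat \<Rightarrow> nat) \<Rightarrow> nat \<Rightarrow> nat \<Rightarrow> real" where
  "PiPh L a i j =
     (if i = j \<and> i \<in> {1..L} then
        (if i = 1 then delta (a 2) 1
         else if i = L then delta (a (L - 1)) 1
         else (delta (a (i - 1)) 1 + delta (a (i + 1)) 1) / 2)
      else 0)"

definition Pa :: "nat \<Rightarrow> (nat \<Rightarrow> nat) \<Rightarrow> nat \<Rightarrow> nat \<Rightarrow> real" where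
  "Pa L a i j = (if i = j \<and> i \<in> {1..L} then delta (a i) 1 else 0)"

definition Hop :: "nat \<Rightarrow> real \<Rightarrow> (nat \<Rightarrow> nat) \<Rightarrow> nat \<Rightarrow> nat \<Rightarrow> real" where
  "Hop L lam a = mmul L (Pa L a) (mmul L (\<lambda>i j. PiPh L a i j - lam * PiOp L i j) (Pa L a))"

definition subsp :: "(nat \<Rightarrow> nat) \<Rightarrow> (nat \<Rightarrow> real) set" where
  "subsp a = {v. \<forall>k. a k \<noteq> 1 \<longrightarrow> v k = 0}"

text \<open>Eigenvalues of the operator restricted to the subspace (which it leaves invariant).\<close>
definition restr_eigenvalues :: "nat \<Rightarrow> real \<Rightarrow> (nat \<Rightarrow> nat) \<Rightarrow> real set" where
  "restr_eigenvalues L lam a =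
     {\<mu>. \<exists>v \<in> subsp a. v \<noteq> (\<lambda>_. 0) \<and> mvec L (Hop L lam a) v = (\<lambda>i. \<mu> * v i)}"

definition LambdaMax :: "nat \<Rightarrow> real \<Rightarrow> (nat \<Rightarrow> nat) \<Rightarrow> real" where
  "LambdaMax L lam a = Max (restr_eigenvalues L lam a)"

definition Omega1 :: "nat \<Rightarrow> real \<Rightarrow> real" where
  "Omega1 L lam = Max {LambdaMax L lam a | a. a \<in> bitstrings L \<and> wt L a = 2}"

end

theory Submission
  imports Defs "HOL-Library.FuncSet"
begin
lemma mmul_Pa_left: "mmul L (Pa L a) B i j = (if i \<in> {1..L} \<and> a i = 1 then B i j else 0)"
proof -
  have "mmul L (Pa L a) B i j = (\<Sum>k\<in>{1..L}. if k = i then (if i \<in> {1..L} \<and> a i = 1 then B i j else 0) else 0)"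
    unfolding mmul_def Pa_def delta_def by (rule sum.cong) auto
  also have "\<dots> = (if i \<in> {1..L} \<and> a i = 1 then B i j else 0)"
    by (subst sum.delta) auto
  finally show ?thesis .
qed
lemma mmul_Pa_right: "mmul L B (Pa L a) i j = (if j \<in> {1..L} \<and> a j = 1 then B i j else 0)"
proof -
  have "mmul L B (Pa L a) i j = (\<Sum>k\<in>{1..L}. if k = j then (if j \<in> {1..L} \<and> a j = 1 then B i j else 0) else 0)"
    unfolding mmul_def Pa_def delta_def by (rule sum.cong) auto
  also have "\<dots> = (if j \<in> {1..L} \<and> a j = 1 then B i j else 0)"
    by (subst sum.delta) auto
  finally show ?thesis .
qed
lemma Hop_eq: "Hop L lam a i j = (if i \<in> {1..L} \<and> j \<in> {1..L} \<and> a i = 1 \<and> a j = 1 then PiPh L a i j - lam * PiOp L i j else 0)"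
  unfolding Hop_def mmul_Pa_left mmul_Pa_right by auto
lemma PiOp_sym: "PiOp L i j = PiOp L j i"
  unfolding PiOp_def by (auto simp: min.commute)
lemma PiPh_sym: "PiPh L a i j = PiPh L a j i"
  unfolding PiPh_def by auto

lemma eig2:
  fixes \<alpha> \<beta> \<gamma> :: real
  shows "{\<mu>. \<exists>x y. (x \<noteq> 0 \<or> y \<noteq> 0) \<and> \<alpha>*x + \<beta>*y = \<mu>*x \<and> \<beta>*x + \<gamma>*y = \<mu>*y}
     = {(\<alpha>+\<gamma>)/2 - sqrt(((\<alpha>-\<gamma>)/2)^2 + \<beta>^2), (\<alpha>+\<gamma>)/2 + sqrt(((\<alpha>-\<gamma>)/2)^2 + \<beta>^2)}"
proof -
  define r where "r = sqrt(((\<alpha>-\<gamma>)/2)^2 + \<beta>^2)"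
  have r2: "r^2 = ((\<alpha>-\<gamma>)/2)^2 + \<beta>^2" unfolding r_def by simp
  have r0: "r \<ge> 0" unfolding r_def by simp
  have A: "(\<exists>x y. (x \<noteq> 0 \<or> y \<noteq> 0) \<and> \<alpha>*x + \<beta>*y = \<mu>*x \<and> \<beta>*x + \<gamma>*y = \<mu>*y) \<longleftrightarrow> (\<alpha>-\<mu>)*(\<gamma>-\<mu>) = \<beta>^2" for \<mu>
  proof
    assume "\<exists>x y. (x \<noteq> 0 \<or> y \<noteq> 0) \<and> \<alpha>*x + \<beta>*y = \<mu>*x \<and> \<beta>*x + \<gamma>*y = \<mu>*y"
    then obtain x y where h: "x \<noteq> 0 \<or> y \<noteq> 0" "\<alpha>*x + \<beta>*y = \<mu>*x" "\<beta>*x + \<gamma>*y = \<mu>*y" by blast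
    have e1: "((\<alpha>-\<mu>)*(\<gamma>-\<mu>) - \<beta>^2) * x = 0"
    proof -
      have "((\<alpha>-\<mu>)*(\<gamma>-\<mu>) - \<beta>^2) * x = (\<gamma>-\<mu>)*(\<alpha>*x + \<beta>*y - \<mu>*x) - \<beta>*(\<beta>*x + \<gamma>*y - \<mu>*y)"
        by (simp add: algebra_simps power2_eq_square)
      then show ?thesis using h by simp
    qed
    have e2: "((\<alpha>-\<mu>)*(\<gamma>-\<mu>) - \<beta>^2) * y = 0"
    proof -
      have "((\<alpha>-\<mu>)*(\<gamma>-\<mu>) - \<beta>^2) * y = (\<alpha>-\<mu>)*(\<beta>*x + \<gamma>*y - \<mu>*y) - \<beta>*(\<alpha>*x + \<beta>*y - \<mu>*x)"
        by (simp add: algebra_simps power2_eq_square)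
      then show ?thesis using h by simp
    qed
    show "(\<alpha>-\<mu>)*(\<gamma>-\<mu>) = \<beta>^2" using e1 e2 h(1) by auto
  next
    assume d: "(\<alpha>-\<mu>)*(\<gamma>-\<mu>) = \<beta>^2"
    show "\<exists>x y. (x \<noteq> 0 \<or> y \<noteq> 0) \<and> \<alpha>*x + \<beta>*y = \<mu>*x \<and> \<beta>*x + \<gamma>*y = \<mu>*y"
    proof (cases "\<beta> = 0")
      case True
      then have "\<mu> = \<alpha> \<or> \<mu> = \<gamma>" using d by auto
      then show ?thesis
      proof
        assume "\<mu> = \<alpha>" then show ?thesis using True by (intro exI[of _ 1] exI[of _ 0]) auto
      next
        assume "\<mu> = \<gamma>" then show ?thesis using True by (intro exI[of _ 0] exI[of _ 1]) auto
      qed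
    next
      case False
      show ?thesis
        apply (rule exI[of _ \<beta>], rule exI[of _ "\<mu> - \<alpha>"])
        using False d by (auto simp: algebra_simps power2_eq_square)
    qed
  qed
  have B: "(\<alpha>-\<mu>)*(\<gamma>-\<mu>) = \<beta>^2 \<longleftrightarrow> \<mu> = (\<alpha>+\<gamma>)/2 - r \<or> \<mu> = (\<alpha>+\<gamma>)/2 + r" for \<mu>
  proof -
    have "(\<alpha>-\<mu>)*(\<gamma>-\<mu>) - \<beta>^2 = (\<mu> - (\<alpha>+\<gamma>)/2)^2 - r^2"
      unfolding r2 by (simp add: field_simps power2_eq_square)
    then have "(\<alpha>-\<mu>)*(\<gamma>-\<mu>) = \<beta>^2 \<longleftrightarrow> (\<mu> - (\<alpha>+\<gamma>)/2)^2 = r^2" by auto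
    also have "\<dots> \<longleftrightarrow> \<mu> - (\<alpha>+\<gamma>)/2 = r \<or> \<mu> - (\<alpha>+\<gamma>)/2 = - r"
      by (rule power2_eq_iff)
    finally show ?thesis by auto
  qed
  show ?thesis using A B unfolding r_def[symmetric] by auto
qed
definition MM :: "nat \<Rightarrow> real \<Rightarrow> (nat \<Rightarrow> nat) \<Rightarrow> nat \<Rightarrow> nat \<Rightarrow> real" where
  "MM L lam a i j = PiPh L a i j - lam * PiOp L i j"

lemma mvec_pq:
  assumes a: "\<And>i. a i = 1 \<longleftrightarrow> (i = p \<or> i = q)" and pq: "p \<noteq> q" "p \<in> {1..L}" "q \<in> {1..L}"
    and v: "v \<in> subsp a"
  shows "mvec L (Hop L lam a) v = (\<lambda>i. if i = p \<or> i = q then MM L lam a i p * v p + MM L lam a i q * v q else 0)"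
proof
  fix i
  have vz: "v j = 0" if "j \<noteq> p" "j \<noteq> q" for j using v that a unfolding subsp_def by auto
  show "mvec L (Hop L lam a) v i = (if i = p \<or> i = q then MM L lam a i p * v p + MM L lam a i q * v q else 0)"
  proof (cases "i \<in> {1..L}")
    case False
    then show ?thesis using pq unfolding mvec_def by auto
  next
    case True
    have "(\<Sum>j=1..L. Hop L lam a i j * v j) = (\<Sum>j\<in>{p,q}. Hop L lam a i j * v j)"
      by (rule sum.mono_neutral_right) (use pq vz in auto)
    also have "\<dots> = Hop L lam a i p * v p + Hop L lam a i q * v q" using pq by simp
    finally show ?thesis using True pq a unfolding mvec_def Hop_eq MM_def by auto
  qed
qed

lemma eigs_pq:
  assumes a: "\<And>i. a i = 1 \<longleftrightarrow> (i = p \<or> i = q)" and pq: "p \<noteq> q" "p \<in> {1..L}" "q \<in> {1..L}"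
  shows "restr_eigenvalues L lam a = {\<mu>. \<exists>x y. (x \<noteq> 0 \<or> y \<noteq> 0) \<and> MM L lam a p p*x + MM L lam a p q*y = \<mu>*x
      \<and> MM L lam a p q*x + MM L lam a q q*y = \<mu>*y}"
proof -
  have sym: "MM L lam a q p = MM L lam a p q" unfolding MM_def using PiOp_sym PiPh_sym by metis
  show ?thesis
  proof (rule set_eqI, rule iffI)
    fix \<mu> assume "\<mu> \<in> restr_eigenvalues L lam a"
    then obtain v where v: "v \<in> subsp a" "v \<noteq> (\<lambda>_. 0)" "mvec L (Hop L lam a) v = (\<lambda>i. \<mu> * v i)"
      unfolding restr_eigenvalues_def by blast
    have vz: "v j = 0" if "j \<noteq> p" "j \<noteq> q" for j using v that a unfolding subsp_def by auto
    have nz: "v p \<noteq> 0 \<or> v q \<noteq> 0" using v(2) vz by fastforce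
    have e: "(\<lambda>i. if i = p \<or> i = q then MM L lam a i p * v p + MM L lam a i q * v q else 0) = (\<lambda>i. \<mu> * v i)"
      using v(3) mvec_pq[OF a pq v(1)] by simp
    have e1: "MM L lam a p p * v p + MM L lam a p q * v q = \<mu> * v p" using fun_cong[OF e, of p] by simp
    have e2: "MM L lam a p q * v p + MM L lam a q q * v q = \<mu> * v q" using fun_cong[OF e, of q] sym by simp
    show "\<mu> \<in> {\<mu>. \<exists>x y. (x \<noteq> 0 \<or> y \<noteq> 0) \<and> MM L lam a p p*x + MM L lam a p q*y = \<mu>*x
      \<and> MM L lam a p q*x + MM L lam a q q*y = \<mu>*y}" using nz e1 e2 by blast
  next
    fix \<mu> assume "\<mu> \<in> {\<mu>. \<exists>x y. (x \<noteq> 0 \<or> y \<noteq> 0) \<and> MM L lam a p p*x + MM L lam a p q*y = \<mu>*x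
      \<and> MM L lam a p q*x + MM L lam a q q*y = \<mu>*y}"
    then obtain x y where h: "x \<noteq> 0 \<or> y \<noteq> 0" "MM L lam a p p*x + MM L lam a p q*y = \<mu>*x"
      "MM L lam a p q*x + MM L lam a q q*y = \<mu>*y" by blast
    define v where "v = (\<lambda>i. if i = p then x else if i = q then y else (0::real))"
    have vs: "v \<in> subsp a" unfolding subsp_def v_def using a by auto
    have vnz: "v \<noteq> (\<lambda>_. 0)"
    proof
      assume "v = (\<lambda>_. 0)"
      then have "v p = 0" "v q = 0" by auto
      then show False using h(1) pq unfolding v_def by auto
    qed
    have "mvec L (Hop L lam a) v = (\<lambda>i. \<mu> * v i)"
      unfolding mvec_pq[OF a pq vs]
    proof
      fix i show "(if i = p \<or> i = q then MM L lam a i p * v p + MM L lam a i q * v q else 0) = \<mu> * v i"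
        using h pq sym unfolding v_def by auto
    qed
    then show "\<mu> \<in> restr_eigenvalues L lam a" unfolding restr_eigenvalues_def using vs vnz by blast
  qed
qed

lemma LambdaMax_pq:
  assumes a: "\<And>i. a i = 1 \<longleftrightarrow> (i = p \<or> i = q)" and pq: "p \<noteq> q" "p \<in> {1..L}" "q \<in> {1..L}"
  shows "LambdaMax L lam a = (MM L lam a p p + MM L lam a q q)/2
     + sqrt(((MM L lam a p p - MM L lam a q q)/2)^2 + (MM L lam a p q)^2)"
  unfolding LambdaMax_def eigs_pq[OF a pq] eig2
  by (simp add: max_def)
lemma vals:
  assumes a: "\<And>i. a i = 1 \<longleftrightarrow> (i = p \<or> i = q)" and pq: "p < q" "1 \<le> p" "q \<le> L" and L: "L \<ge> 3"
  shows "PiPh L a p p = (if q = p+1 then (if p = 1 then 1 else 1/2) else 0)"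
    and "PiPh L a q q = (if q = p+1 then (if q = L then 1 else 1/2) else 0)"
    and "PiPh L a p q = 0"
    and "PiOp L p p = 1/2" and "PiOp L q q = 1/2"
    and "PiOp L p q = (if q = p+1 then (if p = 1 \<or> p = L-1 then -1/(2*sqrt 2) else -1/4) else 0)"
proof -
  have d: "\<And>i. delta (a i) 1 = (if i = p \<or> i = q then 1 else 0)" using a by (simp add: delta_def)
  show "PiPh L a p p = (if q = p+1 then (if p = 1 then 1 else 1/2) else 0)"
    using pq L unfolding PiPh_def d by auto
  show "PiPh L a q q = (if q = p+1 then (if q = L then 1 else 1/2) else 0)"
    using pq L unfolding PiPh_def d by auto
  show "PiPh L a p q = 0" using pq unfolding PiPh_def by auto
  show "PiOp L p p = 1/2" "PiOp L q q = 1/2" using pq unfolding PiOp_def by auto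
  show "PiOp L p q = (if q = p+1 then (if p = 1 \<or> p = L-1 then -1/(2*sqrt 2) else -1/4) else 0)"
    using pq L unfolding PiOp_def by auto
qed

lemma sq8: "(lam * (- 1 / (2 * sqrt 2)))^2 = (lam::real)^2/8"
  by (simp add: power_divide power_mult_distrib)

lemma bound:
  fixes \<alpha> \<beta> \<gamma> lam :: real
  assumes "\<alpha> + \<gamma> \<le> 3/2 - lam" "((\<alpha>-\<gamma>)/2)^2 \<le> 1/16" "\<beta>^2 \<le> lam^2/8"
  shows "(\<alpha>+\<gamma>)/2 + sqrt(((\<alpha>-\<gamma>)/2)^2+\<beta>^2) \<le> (3 - 2 * lam + sqrt (1 + 2 * lam\<^sup>2)) / 4"
proof -
  have "sqrt(((\<alpha>-\<gamma>)/2)^2+\<beta>^2) \<le> sqrt((1 + 2*lam^2)/16)"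
    using assms by (intro real_sqrt_le_mono) auto
  also have "\<dots> = sqrt (1 + 2*lam^2) / 4" by (simp add: real_sqrt_divide)
  finally have "sqrt(((\<alpha>-\<gamma>)/2)^2+\<beta>^2) \<le> sqrt (1 + 2*lam^2) / 4" .
  moreover have "(\<alpha>+\<gamma>)/2 \<le> (3 - 2*lam)/4" using assms(1) by (simp add: field_simps)
  moreover have "(3 - 2 * lam + sqrt (1 + 2 * lam\<^sup>2)) / 4 = (3 - 2*lam)/4 + sqrt (1 + 2*lam^2) / 4"
    by (simp add: field_simps)
  ultimately show ?thesis by linarith
qed

lemma Lam_le:
  assumes a: "\<And>i. a i = 1 \<longleftrightarrow> (i = p \<or> i = q)" and pq: "p < q" "1 \<le> p" "q \<le> L" and L: "L \<ge> 3"
    and lam: "lam > 0"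
  shows "LambdaMax L lam a \<le> (3 - 2 * lam + sqrt (1 + 2 * lam\<^sup>2)) / 4"
proof -
  have pq': "p \<noteq> q" "p \<in> {1..L}" "q \<in> {1..L}" using pq by auto
  note V = vals[OF a pq L]
  show ?thesis unfolding LambdaMax_pq[OF a pq'] MM_def V
    apply (rule bound)
    using L pq lam by (auto simp: sq8 power_divide power2_eq_square)
qed

lemma Lam_eq:
  assumes a: "\<And>i. a i = 1 \<longleftrightarrow> (i = 1 \<or> i = 2)" and L: "L \<ge> 3"
  shows "LambdaMax L lam a = (3 - 2 * lam + sqrt (1 + 2 * lam\<^sup>2)) / 4"
proof -
  have pq': "(1::nat) \<noteq> 2" "1 \<in> {1..L}" "2 \<in> {1..L}" using L by auto
  have pq: "(1::nat) < 2" "1 \<le> (1::nat)" "2 \<le> L" using L by auto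
  note V = vals[OF a pq L]
  have "sqrt (((1 - lam * (1 / 2) - (1 / 2 - lam * (1 / 2))) / 2)\<^sup>2 + (0 - lam * (- 1 / (2 * sqrt 2)))\<^sup>2)
     = sqrt ((1 + 2*lam^2)/16)"
    by (rule arg_cong[where f=sqrt]) (simp add: power_divide power_mult_distrib)
  also have "\<dots> = sqrt (1 + 2*lam^2) / 4" by (simp add: real_sqrt_divide)
  finally have s: "sqrt (((1 - lam * (1 / 2) - (1 / 2 - lam * (1 / 2))) / 2)\<^sup>2 + (0 - lam * (- 1 / (2 * sqrt 2)))\<^sup>2) = sqrt (1 + 2*lam^2) / 4" .
  show ?thesis unfolding LambdaMax_pq[OF a pq'] MM_def V using L s by (simp add: field_simps)
qed

lemma nonneg:
  fixes lam :: real
  assumes "lam > 0" "lam \<le> 3 + sqrt 5"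
  shows "(3 - 2 * lam + sqrt (1 + 2 * lam\<^sup>2)) / 4 \<ge> 0"
proof (cases "2*lam \<le> 3")
  case True then show ?thesis by (simp add: add_nonneg_nonneg)
next
  case False
  have s5: "sqrt 5 ^2 = 5" by simp
  have s52: "sqrt 5 \<ge> 2" by (simp add: real_le_rsqrt)
  have "(sqrt 5 - (lam - 3)) * (sqrt 5 + (lam - 3)) \<ge> 0"
    using assms s52 False by (intro mult_nonneg_nonneg) auto
  then have "(lam-3)^2 \<le> 5" using s5 by (simp add: algebra_simps power2_eq_square)
  then have "(2*lam-3)^2 \<le> 1 + 2*lam^2" by (simp add: algebra_simps power2_eq_square)
  then have "sqrt ((2*lam-3)^2) \<le> sqrt (1 + 2*lam^2)" by (rule real_sqrt_le_mono)
  then have "2*lam - 3 \<le> sqrt (1 + 2*lam^2)" using False by simp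
  then show ?thesis by simp
qed

lemma fin_bits: "finite (bitstrings L)"
proof -
  have "bitstrings L \<subseteq> (\<lambda>f i. if i \<in> {1..L} then f i else 0) ` (PiE {1..L} (\<lambda>_. {0,1::nat}))"
  proof
    fix a assume a: "a \<in> bitstrings L"
    have "a = (\<lambda>i. if i \<in> {1..L} then restrict a {1..L} i else 0)"
      using a unfolding bitstrings_def by (auto simp: fun_eq_iff restrict_def)
    moreover have "restrict a {1..L} \<in> PiE {1..L} (\<lambda>_. {0,1})" using a unfolding bitstrings_def by auto
    ultimately show "a \<in> (\<lambda>f i. if i \<in> {1..L} then f i else 0) ` (PiE {1..L} (\<lambda>_. {0,1::nat}))" by blast
  qed
  then show ?thesis by (rule finite_subset) (intro finite_imageI finite_PiE, auto)
qed

theorem lemma1: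
  fixes L :: nat and lam :: real
  assumes "L \<ge> 3" and "lam > 0"
  shows "Omega1 L lam = (3 - 2 * lam + sqrt (1 + 2 * lam\<^sup>2)) / 4
         \<and> (lam \<le> 3 + sqrt 5 \<longrightarrow> Omega1 L lam \<ge> 0)"
proof -
  define C where "C = (3 - 2 * lam + sqrt (1 + 2 * lam\<^sup>2)) / 4"
  define S where "S = {LambdaMax L lam a | a. a \<in> bitstrings L \<and> wt L a = 2}"
  have finS: "finite S"
  proof -
    have "S \<subseteq> LambdaMax L lam ` bitstrings L" unfolding S_def by auto
    then show ?thesis using fin_bits finite_subset by blast
  qed
  have le: "y \<le> C" if ys: "y \<in> S" for y
  proof -
    obtain a where a: "a \<in> bitstrings L" "wt L a = 2" "y = LambdaMax L lam a"
      using ys unfolding S_def by auto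
    obtain p q where pq0: "p \<noteq> q" "{i \<in> {1..L}. a i = 1} = {p,q}"
      using a(2) unfolding wt_def card_2_iff by blast
    obtain p' q' where pq: "p' < q'" "{i \<in> {1..L}. a i = 1} = {p',q'}"
    proof (cases "p < q")
      case True then show ?thesis using that pq0 by blast
    next
      case False then have "q < p" using pq0 by auto
      then show ?thesis using that pq0 by (metis insert_commute)
    qed
    have inL: "p' \<in> {1..L}" "q' \<in> {1..L}" using pq(2) by blast+
    have aiff: "a i = 1 \<longleftrightarrow> (i = p' \<or> i = q')" for i
    proof (cases "i \<in> {1..L}")
      case True then show ?thesis using pq(2) by blast
    next
      case False
      then have "a i = 0" using a(1) unfolding bitstrings_def by auto
      then show ?thesis using False inL by auto
    qed
    show ?thesis unfolding a(3) C_def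
      by (rule Lam_le[OF aiff pq(1) _ _ assms]) (use inL in auto)
  qed
  define a0 where "a0 = (\<lambda>i::nat. if i = 1 \<or> i = 2 then 1 else (0::nat))"
  have a0iff: "a0 i = 1 \<longleftrightarrow> (i = 1 \<or> i = 2)" for i unfolding a0_def by auto
  have "a0 \<in> bitstrings L" using assms(1) unfolding bitstrings_def a0_def by auto
  moreover have "wt L a0 = 2"
  proof -
    have "{i \<in> {1..L}. a0 i = 1} = {1,2}" using assms(1) a0iff by auto
    then show ?thesis unfolding wt_def by simp
  qed
  moreover have "C = LambdaMax L lam a0" unfolding C_def using Lam_eq[OF a0iff assms(1)] by simp
  ultimately have "C \<in> S" unfolding S_def by blast
  then have "Omega1 L lam = C" unfolding Omega1_def S_def[symmetric]
    using finS le by (intro Max_eqI) auto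
  then show ?thesis using nonneg[OF assms(2)] unfolding C_def by auto
qed
end
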